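(* Let $T$ be a compact torus with Lie algebra $\mathfrak t$ and cocharacter lattice $\mathfrak t_{\mathbb Z}\subset\mathfrak t$, let $a_1,\dots,a_n$ be the weights of $T$ on a Lagrangian half of the representation $V$ as in the context, and let $R^+$ be the set of positive roots of $G$ with respect to $T$. Define $$\Delta(\beta)=\frac12\sum_{j=1}^n|a_j(\beta)|-\sum_{\alpha\in R^+}|\alpha(\beta)|,\qquad\beta\in\mathfrak t.$$ Then $\Delta(\beta)>0$ for all nonzero $\beta\in\mathfrak t$ if and only if $\Delta(\beta)>0$ for all nonzero $\beta\in\mathfrak t_{\mathbb Z}$.
   Context: $G$ is a connected compact Lie group with maximal torus $T$, acting on a complex symplectic vector space $(V,\Omega)$ of dimension $2n$ through $USp(V,\Omega)$. A Darboux basis $x_1,\dots,x_n,y_1,\dots,y_n$ of $T$-weight vectors is fixed with $\beta x_j=-a_j(\beta)x_j$, $\beta y_j=a_j(\beta)y_j$ for $\beta\in\mathfrak t$; the $a_j$ and the roots $\alpha\in R^+$ are linear functionals on $\mathfrak t$ (with imaginary values) which take values in $i\mathbb Q$ (up to a fixed common normalization, values in a rational multiple of $i\mathbb Z$) on $\mathfrak t_{\mathbb Z}$. *)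

theory Defs
  imports "HOL-Analysis.Analysis"
begin

text \<open>The Lie algebra t of the torus T is modelled as real^'r (r = rank), with the
  cocharacter lattice t_Z identified with the integer points (via a lattice basis).\<close>

definition coch_lattice :: "(real ^ 'r) set" where
  "coch_lattice = {\<beta>. \<forall>i. \<beta> $ i \<in> \<int>}"

definition rat_imag_weight :: "(real ^ 'r \<Rightarrow> complex) \<Rightarrow> bool" where
  "rat_imag_weight f \<longleftrightarrow> linear f \<and> (\<forall>\<beta>. Re (f \<beta>) = 0)
     \<and> (\<forall>\<beta>\<in>coch_lattice. Im (f \<beta>) \<in> \<rat>)"

definition Delta :: "nat \<Rightarrow> (nat \<Rightarrow> real ^ 'r \<Rightarrow> complex) \<Rightarrow> (real ^ 'r \<Rightarrow> complex) set
    \<Rightarrow> real ^ 'r \<Rightarrow> real" where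
  "Delta n a Rpos \<beta> = (1/2) * (\<Sum>j=1..n. cmod (a j \<beta>)) - (\<Sum>\<alpha>\<in>Rpos. cmod (\<alpha> \<beta>))"

end

theory Submission imports Defs begin

definition ratpt :: "real ^ 'r \<Rightarrow> bool" where
  "ratpt x \<longleftrightarrow> (\<forall>i. x $ i \<in> \<rat>)"

definition ratfun :: "(real ^ 'r \<Rightarrow> real) \<Rightarrow> bool" where
  "ratfun g \<longleftrightarrow> linear g \<and> (\<forall>\<beta>\<in>coch_lattice. g \<beta> \<in> \<rat>)"

lemma ratfun_rat:
  assumes "ratfun g" "ratpt x" shows "g x \<in> \<rat>"
proof -
  have lin: "linear g" using assms(1) by (simp add: ratfun_def)
  have ax: "g (axis i 1) \<in> \<rat>" for i
    using assms(1) unfolding ratfun_def coch_lattice_def by (auto simp: axis_def)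
  have "g x = g (\<Sum>i\<in>UNIV. x $ i *s axis i 1)" by (simp add: basis_expansion)
  also have "\<dots> = (\<Sum>i\<in>UNIV. x $ i * g (axis i 1))"
    using lin by (simp add: linear_sum linear_cmul scalar_mult_eq_scaleR)
  finally show ?thesis using ax assms(2) unfolding ratpt_def
    by (auto intro!: Rats_sum Rats_mult)
qed

lemma ratpt_dense: "closure {q::real^'r. ratpt q} = UNIV"
proof -
  have "x \<in> closure {q::real^'r. ratpt q}" for x
  proof (unfold closure_approachable, intro allI impI)
    fix e :: real assume e: "e > 0"
    define c where "c = e / (2 * real CARD('r))"
    have c: "c > 0" using e by (simp add: c_def)
    have "\<forall>i. \<exists>r\<in>\<rat>. x $ i < r \<and> r < x $ i + c"
      using c by (auto intro: Rats_dense_in_real)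
    then obtain f where f: "\<And>i. f i \<in> \<rat> \<and> x $ i < f i \<and> f i < x $ i + c" by metis
    define q where "q = (\<chi> i. f i)"
    have fi: "\<bar>f i - x $ i\<bar> \<le> c" for i using f[of i] by auto
    have "ratpt q" using f by (simp add: q_def ratpt_def)
    moreover have "dist q x < e"
    proof -
      have "dist q x = norm (q - x)" by (simp add: dist_norm)
      also have "\<dots> \<le> (\<Sum>i\<in>UNIV. \<bar>(q - x) $ i\<bar>)" by (rule norm_le_l1_cart)
      also have "\<dots> \<le> (\<Sum>i\<in>(UNIV::'r set). c)"
        by (rule sum_mono) (use fi in \<open>auto simp: q_def\<close>)
      also have "\<dots> = e / 2" using c by (simp add: c_def)
      also have "\<dots> < e" using e by simp
      finally show ?thesis .
    qed
    ultimately show "\<exists>y\<in>{q. ratpt q}. dist y x < e" by auto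
  qed
  then show ?thesis by auto
qed

lemma ratpt_denom:
  assumes "ratpt q" shows "\<exists>d::real. d > 0 \<and> (\<forall>i. d * q $ i \<in> \<int>)"
proof -
  have "\<forall>i. \<exists>m::nat. m > 0 \<and> real m * q $ i \<in> \<int>"
  proof
    fix i
    have "q $ i \<in> \<rat>" using assms by (simp add: ratpt_def)
    then obtain a b where ab: "0 < b" "q $ i = of_int a / of_int b" by (rule Rats_cases')
    show "\<exists>m::nat. m > 0 \<and> real m * q $ i \<in> \<int>"
      by (rule exI[of _ "nat b"]) (use ab in auto)
  qed
  then obtain m where m: "\<And>i. m i > 0 \<and> real (m i) * q $ i \<in> \<int>" by metis
  define d where "d = (\<Prod>i\<in>UNIV. real (m i))"
  have "d > 0" using m by (simp add: d_def prod_pos)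
  moreover have "d * q $ i \<in> \<int>" for i
  proof -
    have d_eq: "d = real (m i) * (\<Prod>j\<in>UNIV - {i}. real (m j))"
      unfolding d_def by (simp add: prod.remove)
    have "d * q $ i = (real (m i) * q $ i) * (\<Prod>j\<in>UNIV - {i}. real (m j))"
      unfolding d_eq by (simp only: mult_ac)
    also have "\<dots> \<in> \<int>"
    proof -
      have h1: "real (m i) * q $ i \<in> \<int>" using m by blast
      have h2: "(\<Prod>j\<in>UNIV - {i}. real (m j)) \<in> \<int>" by (intro Ints_prod) auto
      show ?thesis by (rule Ints_mult[OF h1 h2])
    qed
    finally show ?thesis .
  qed
  ultimately show ?thesis by blast
qed


definition zs :: "((real^'r) \<Rightarrow> real) set \<Rightarrow> (real^'r) set" where
  "zs G = {x. \<forall>g\<in>G. g x = 0}"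

lemma rat_dense_sub:
  assumes "finite G" "\<forall>g\<in>G. ratfun g"
  shows "zs G \<subseteq> closure {q. ratpt q \<and> q \<in> zs G}"
  using assms
proof (induction G rule: finite_induct)
  case empty
  show ?case by (simp add: zs_def ratpt_dense)
next
  case (insert g G)
  have IH: "zs G \<subseteq> closure {q. ratpt q \<and> q \<in> zs G}" using insert by auto
  have rg: "ratfun g" using insert by auto
  have lg: "linear g" using rg by (simp add: ratfun_def)
  have lG: "\<And>h. h \<in> G \<Longrightarrow> linear h" using insert by (auto simp: ratfun_def)
  show ?case
  proof (cases "\<forall>x\<in>zs G. g x = 0")
    case True
    then have "zs (insert g G) = zs G" by (auto simp: zs_def)
    then show ?thesis using IH by simp
  next
    case False
    then obtain x where x: "x \<in> zs G" "g x \<noteq> 0" by auto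
    have cg: "continuous_on UNIV g" using lg by (simp add: linear_continuous_on linear_conv_bounded_linear)
    have op: "open {y. g y \<noteq> 0}"
      using cg by (simp add: open_Collect_neq continuous_on_const)
    have "x \<in> {y. g y \<noteq> 0} \<inter> closure {q. ratpt q \<and> q \<in> zs G}" using x IH by auto
    then have "{y. g y \<noteq> 0} \<inter> {q. ratpt q \<and> q \<in> zs G} \<noteq> {}"
      using open_Int_closure_eq_empty[OF op] by auto
    then obtain u where u: "g u \<noteq> 0" "ratpt u" "u \<in> zs G" by blast
    define p where "p = (\<lambda>y. y - (g y / g u) *\<^sub>R u)"
    have cp: "continuous_on UNIV p" unfolding p_def
      by (intro continuous_intros continuous_on_compose2[OF cg]) (use u in auto)
    have "p ` {q. ratpt q \<and> q \<in> zs G} \<subseteq> {q. ratpt q \<and> q \<in> zs (insert g G)}"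
    proof safe
      fix y assume y: "ratpt y" "y \<in> zs G"
      have gy: "g y \<in> \<rat>" "g u \<in> \<rat>" using ratfun_rat[OF rg] y u by auto
      show "ratpt (p y)" using y u gy unfolding ratpt_def p_def
        by (auto intro!: Rats_diff Rats_mult Rats_divide)
      show "p y \<in> zs (insert g G)"
        unfolding zs_def
      proof safe
        show "g (p y) = 0" using u lg by (simp add: p_def linear_diff linear_cmul)
        fix h assume h: "h \<in> G"
        have "h y = 0" "h u = 0" using h y u by (auto simp: zs_def)
        then show "h (p y) = 0" using lG[OF h] by (simp add: p_def linear_diff linear_cmul)
      qed
    qed
    then have "p ` closure {q. ratpt q \<and> q \<in> zs G} \<subseteq> closure {q. ratpt q \<and> q \<in> zs (insert g G)}"
      by (intro image_closure_subset continuous_on_subset[OF cp]) (use closure_subset in blast)+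
    moreover have "p b = b" if "b \<in> zs (insert g G)" for b
      using that by (simp add: p_def zs_def)
    ultimately show ?thesis using IH by (force simp: zs_def)
  qed
qed


lemma cmod_Re0: "Re z = 0 \<Longrightarrow> cmod z = \<bar>Im z\<bar>"
  by (simp add: cmod_def)

lemma sgn_rat: "sgn (x::real) \<in> \<rat>"
  by (simp add: sgn_real_def)

lemma abs_sgn_pos: "(x::real) * y > 0 \<Longrightarrow> \<bar>x\<bar> = sgn y * x"
  by (auto simp: sgn_real_def zero_less_mult_iff)

lemma abs_sgn_self: "\<bar>x::real\<bar> = sgn x * x"
  by (auto simp: sgn_real_def)

lemma riw_ratfun: "rat_imag_weight f \<Longrightarrow> ratfun (\<lambda>\<beta>. Im (f \<beta>))"
  unfolding rat_imag_weight_def ratfun_def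
  using linear_compose[of f Im] bounded_linear_Im
  by (auto simp: o_def linear_conv_bounded_linear)

theorem mainTheorem5:
  fixes n :: nat
    and a :: "nat \<Rightarrow> real ^ 'r \<Rightarrow> complex"
    and Rpos :: "(real ^ 'r \<Rightarrow> complex) set"
  assumes "\<And>j. j \<in> {1..n} \<Longrightarrow> rat_imag_weight (a j)"
    and "finite Rpos"
    and "\<And>\<alpha>. \<alpha> \<in> Rpos \<Longrightarrow> rat_imag_weight \<alpha>"
  shows "(\<forall>\<beta>::real ^ 'r. \<beta> \<noteq> 0 \<longrightarrow> Delta n a Rpos \<beta> > 0) \<longleftrightarrow>
         (\<forall>\<beta>\<in>coch_lattice. \<beta> \<noteq> 0 \<longrightarrow> Delta n a Rpos \<beta> > 0)"
proof
  assume "\<forall>\<beta>::real ^ 'r. \<beta> \<noteq> 0 \<longrightarrow> Delta n a Rpos \<beta> > 0"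
  then show "\<forall>\<beta>\<in>coch_lattice. \<beta> \<noteq> 0 \<longrightarrow> Delta n a Rpos \<beta> > 0" by blast
next
  assume H: "\<forall>\<beta>\<in>coch_lattice. \<beta> \<noteq> 0 \<longrightarrow> Delta n a Rpos \<beta> > 0"
  define g where "g = (\<lambda>j \<beta>. Im (a j \<beta>))"
  define h where "h = (\<lambda>(\<alpha>::real ^ 'r \<Rightarrow> complex) \<beta>. Im (\<alpha> \<beta>))"
  have rg: "ratfun (g j)" if "j \<in> {1..n}" for j
    using riw_ratfun[OF assms(1)[OF that]] by (simp add: g_def)
  have rh: "ratfun (h \<alpha>)" if "\<alpha> \<in> Rpos" for \<alpha>
    using riw_ratfun[OF assms(3)[OF that]] by (simp add: h_def)
  have lg: "linear (g j)" if "j \<in> {1..n}" for j using rg[OF that] by (simp add: ratfun_def)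
  have lh: "linear (h \<alpha>)" if "\<alpha> \<in> Rpos" for \<alpha> using rh[OF that] by (simp add: ratfun_def)
  have cg: "continuous_on UNIV (g j)" if "j \<in> {1..n}" for j
    using lg[OF that] by (simp add: linear_continuous_on linear_conv_bounded_linear)
  have ch: "continuous_on UNIV (h \<alpha>)" if "\<alpha> \<in> Rpos" for \<alpha>
    using lh[OF that] by (simp add: linear_continuous_on linear_conv_bounded_linear)
  have Dform: "Delta n a Rpos \<beta> = (1/2) * (\<Sum>j=1..n. \<bar>g j \<beta>\<bar>) - (\<Sum>\<alpha>\<in>Rpos. \<bar>h \<alpha> \<beta>\<bar>)" for \<beta>
  proof -
    have "(\<Sum>j=1..n. cmod (a j \<beta>)) = (\<Sum>j=1..n. \<bar>g j \<beta>\<bar>)"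
      using assms(1) by (intro sum.cong) (auto simp: g_def rat_imag_weight_def cmod_Re0)
    moreover have "(\<Sum>\<alpha>\<in>Rpos. cmod (\<alpha> \<beta>)) = (\<Sum>\<alpha>\<in>Rpos. \<bar>h \<alpha> \<beta>\<bar>)"
      using assms(3) by (intro sum.cong) (auto simp: h_def rat_imag_weight_def cmod_Re0)
    ultimately show ?thesis by (simp add: Delta_def)
  qed
  have cD: "continuous_on UNIV (Delta n a Rpos)"
    unfolding Dform[abs_def]
    by (intro continuous_intros continuous_on_compose2[OF cg] continuous_on_compose2[OF ch]) auto
  have scale: "Delta n a Rpos (d *\<^sub>R q) = d * Delta n a Rpos q" if "d > 0" for d q
  proof -
    have "\<bar>g j (d *\<^sub>R q)\<bar> = d * \<bar>g j q\<bar>" if "j \<in> {1..n}" for j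
      using lg[OF that] \<open>d > 0\<close> by (simp add: linear_cmul abs_mult)
    moreover have "\<bar>h \<alpha> (d *\<^sub>R q)\<bar> = d * \<bar>h \<alpha> q\<bar>" if "\<alpha> \<in> Rpos" for \<alpha>
      using lh[OF that] \<open>d > 0\<close> by (simp add: linear_cmul abs_mult)
    ultimately have "(\<Sum>j=1..n. \<bar>g j (d *\<^sub>R q)\<bar>) = d * (\<Sum>j=1..n. \<bar>g j q\<bar>)"
        "(\<Sum>\<alpha>\<in>Rpos. \<bar>h \<alpha> (d *\<^sub>R q)\<bar>) = d * (\<Sum>\<alpha>\<in>Rpos. \<bar>h \<alpha> q\<bar>)"
      by (simp_all add: sum_distrib_left)
    then show ?thesis unfolding Dform by (simp add: algebra_simps)
  qed
  have key: "\<exists>q. ratpt q \<and> q \<noteq> 0 \<and> Delta n a Rpos q \<le> 0"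
    if b0: "\<beta>0 \<noteq> 0" "Delta n a Rpos \<beta>0 \<le> 0" for \<beta>0
  proof (cases "Delta n a Rpos \<beta>0 < 0")
    case True
    define Ou where "Ou = {\<beta>. Delta n a Rpos \<beta> < 0} \<inter> {\<beta>. \<beta> \<noteq> 0}"
    have "open Ou" unfolding Ou_def
      by (intro open_Int open_Collect_less open_Collect_neq cD continuous_intros)
    moreover have "\<beta>0 \<in> Ou \<inter> closure {q. ratpt q}" using True b0 by (simp add: Ou_def ratpt_dense)
    ultimately have "Ou \<inter> {q. ratpt q} \<noteq> {}" using open_Int_closure_eq_empty by blast
    then show ?thesis unfolding Ou_def by force
  next
    case False
    then have D0: "Delta n a Rpos \<beta>0 = 0" using b0 by simp
    define L where "L = (\<lambda>\<beta>. (1/2) * (\<Sum>j=1..n. sgn (g j \<beta>0) * g j \<beta>)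
        - (\<Sum>\<alpha>\<in>Rpos. sgn (h \<alpha> \<beta>0) * h \<alpha> \<beta>))"
    have rL: "ratfun L"
    proof -
      have "linear L"
      proof (rule linearI)
        fix x y
        have e1: "(\<Sum>j=1..n. sgn (g j \<beta>0) * g j (x + y)) = (\<Sum>j=1..n. sgn (g j \<beta>0) * g j x) + (\<Sum>j=1..n. sgn (g j \<beta>0) * g j y)"
          unfolding sum.distrib[symmetric] by (rule sum.cong) (use lg in \<open>auto simp: linear_add distrib_left\<close>)
        have e2: "(\<Sum>\<alpha>\<in>Rpos. sgn (h \<alpha> \<beta>0) * h \<alpha> (x + y)) = (\<Sum>\<alpha>\<in>Rpos. sgn (h \<alpha> \<beta>0) * h \<alpha> x) + (\<Sum>\<alpha>\<in>Rpos. sgn (h \<alpha> \<beta>0) * h \<alpha> y)"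
          unfolding sum.distrib[symmetric] by (rule sum.cong) (use lh in \<open>auto simp: linear_add distrib_left\<close>)
        show "L (x + y) = L x + L y"
          unfolding L_def e1 e2 by (simp add: algebra_simps)
        fix c :: real
        have e3: "(\<Sum>j=1..n. sgn (g j \<beta>0) * g j (c *\<^sub>R x)) = c * (\<Sum>j=1..n. sgn (g j \<beta>0) * g j x)"
          unfolding sum_distrib_left by (rule sum.cong) (use lg in \<open>auto simp: linear_cmul\<close>)
        have e4: "(\<Sum>\<alpha>\<in>Rpos. sgn (h \<alpha> \<beta>0) * h \<alpha> (c *\<^sub>R x)) = c * (\<Sum>\<alpha>\<in>Rpos. sgn (h \<alpha> \<beta>0) * h \<alpha> x)"
          unfolding sum_distrib_left by (rule sum.cong) (use lh in \<open>auto simp: linear_cmul\<close>)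
        show "L (c *\<^sub>R x) = c *\<^sub>R L x"
          unfolding L_def e3 e4 by (simp add: algebra_simps)
      qed
      moreover have "L \<beta> \<in> \<rat>" if "\<beta> \<in> coch_lattice" for \<beta>
      proof -
        have "g j \<beta> \<in> \<rat>" if "j \<in> {1..n}" for j using rg[OF that] \<open>\<beta> \<in> coch_lattice\<close> by (simp add: ratfun_def)
        moreover have "h \<alpha> \<beta> \<in> \<rat>" if "\<alpha> \<in> Rpos" for \<alpha> using rh[OF that] \<open>\<beta> \<in> coch_lattice\<close> by (simp add: ratfun_def)
        ultimately show ?thesis unfolding L_def
          by (intro Rats_diff Rats_mult Rats_sum sgn_rat) auto
      qed
      ultimately show ?thesis by (simp add: ratfun_def)
    qed
    define G0 where "G0 = (g ` {j\<in>{1..n}. g j \<beta>0 = 0}) \<union> (h ` {\<alpha>\<in>Rpos. h \<alpha> \<beta>0 = 0}) \<union> {L}"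
    have fG0: "finite G0" using assms(2) by (simp add: G0_def)
    have rG0: "\<forall>f\<in>G0. ratfun f" using rg rh rL by (auto simp: G0_def)
    have LD: "L \<beta>0 = Delta n a Rpos \<beta>0"
      unfolding L_def Dform by (simp add: abs_sgn_self)
    have b0z: "\<beta>0 \<in> zs G0" using LD D0 by (auto simp: zs_def G0_def)
    define Ou where "Ou = (\<Inter>j\<in>{j\<in>{1..n}. g j \<beta>0 \<noteq> 0}. {\<beta>. 0 < g j \<beta> * g j \<beta>0})
       \<inter> (\<Inter>\<alpha>\<in>{\<alpha>\<in>Rpos. h \<alpha> \<beta>0 \<noteq> 0}. {\<beta>. 0 < h \<alpha> \<beta> * h \<alpha> \<beta>0}) \<inter> {\<beta>. \<beta> \<noteq> 0}"
    have "open Ou" unfolding Ou_def using assms(2)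
      by (intro open_Int open_INT open_Collect_less open_Collect_neq ballI
            continuous_intros continuous_on_compose2[OF cg] continuous_on_compose2[OF ch]) auto
    moreover have "\<beta>0 \<in> Ou" using b0 by (auto simp: Ou_def zero_less_mult_iff)
    ultimately have "Ou \<inter> {q. ratpt q \<and> q \<in> zs G0} \<noteq> {}"
      using open_Int_closure_eq_empty rat_dense_sub[OF fG0 rG0] b0z by blast
    then obtain q where q: "q \<in> Ou" "ratpt q" "q \<in> zs G0" by blast
    have "Delta n a Rpos q = L q"
    proof -
      have "\<bar>g j q\<bar> = sgn (g j \<beta>0) * g j q" if "j \<in> {1..n}" for j
      proof (cases "g j \<beta>0 = 0")
        case True
        then have "g j \<in> G0" using that by (auto simp: G0_def)
        then show ?thesis using q(3) True by (simp add: zs_def)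
      next
        case False
        then show ?thesis using q(1) that by (intro abs_sgn_pos) (auto simp: Ou_def)
      qed
      moreover have "\<bar>h \<alpha> q\<bar> = sgn (h \<alpha> \<beta>0) * h \<alpha> q" if "\<alpha> \<in> Rpos" for \<alpha>
      proof (cases "h \<alpha> \<beta>0 = 0")
        case True
        then have "h \<alpha> \<in> G0" using that by (auto simp: G0_def)
        then show ?thesis using q(3) True by (simp add: zs_def)
      next
        case False
        then show ?thesis using q(1) that by (intro abs_sgn_pos) (auto simp: Ou_def)
      qed
      ultimately have "(\<Sum>j=1..n. \<bar>g j q\<bar>) = (\<Sum>j=1..n. sgn (g j \<beta>0) * g j q)"
          "(\<Sum>\<alpha>\<in>Rpos. \<bar>h \<alpha> q\<bar>) = (\<Sum>\<alpha>\<in>Rpos. sgn (h \<alpha> \<beta>0) * h \<alpha> q)"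
        by (auto intro!: sum.cong)
      then show ?thesis unfolding Dform L_def by simp
    qed
    also have "L q = 0" using q(3) by (simp add: zs_def G0_def)
    finally show ?thesis using q by (auto simp: Ou_def)
  qed
  show "\<forall>\<beta>::real ^ 'r. \<beta> \<noteq> 0 \<longrightarrow> Delta n a Rpos \<beta> > 0"
  proof (intro allI impI, rule ccontr)
    fix \<beta>0 :: "real ^ 'r"
    assume "\<beta>0 \<noteq> 0" "\<not> Delta n a Rpos \<beta>0 > 0"
    then obtain q where q: "ratpt q" "q \<noteq> 0" "Delta n a Rpos q \<le> 0" using key by force
    obtain d where d: "d > 0" "\<And>i. d * q $ i \<in> \<int>" using ratpt_denom[OF q(1)] by blast
    have "d *\<^sub>R q \<in> coch_lattice" using d by (simp add: coch_lattice_def)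
    moreover have "d *\<^sub>R q \<noteq> 0" using d q by simp
    moreover have "Delta n a Rpos (d *\<^sub>R q) \<le> 0" using scale[OF d(1)] q d
      by (simp add: mult_nonneg_nonpos)
    ultimately show False using H by force
  qed
qed

end
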